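(* Let $m,t,n$ be positive integers with $mt<n\le 2^m$, let $\alpha=(\alpha_1,\dots,\alpha_n)\in\mathbb{F}_{2^m}^n$ be a support tuple, and for $p\in\mathbb{F}_2^n$ with $0<\mathrm{wt}(p)\le t$, $d\in\mathbb{N}$ with $d<t$ and $\varepsilon\in\mathbb{F}_{2^m}$, let $\tilde p\in\mathbb{F}_2^n$ be defined by $\tilde p_k=1$ if and only if $\varepsilon\alpha_k^d+\prod_{l\in I_p}(\alpha_k-\alpha_l)=0$. (a) Suppose $d=0$ and $p=e^{(i_1)}+e^{(i_2)}$ with $i_1\neq i_2$, and suppose $\mathrm{wt}(\tilde p)=2$, say $I_{\tilde p}=\{j_1,j_2\}$. Then $\alpha_{i_1}+\alpha_{i_2}=\alpha_{j_1}+\alpha_{j_2}$. (b) Suppose $d=2$ and $p=e^{(i)}$ for some $i\in\{1,\dots,n\}$, and suppose $\mathrm{wt}(\tilde p)=2$, say $I_{\tilde p}=\{j_1,j_2\}$. Then $\alpha_i\alpha_{j_1}+\alpha_i\alpha_{j_2}+\alpha_{j_1}\alpha_{j_2}=0$. If, additionally, $\alpha_i\neq 0$, then $\alpha_{j_1}\neq 0$ and $\alpha_{j_2}\neq 0$.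
   Context: $\mathbb{F}_{2^m}$ denotes the finite field with $2^m$ elements. A support tuple is a tuple $\alpha\in\mathbb{F}_{2^m}^n$ with pairwise distinct entries. For $c\in\mathbb{F}_2^n$, $I_c=\{i\mid c_i=1\}$ and $\mathrm{wt}(c)=\#I_c$. $e^{(i)}$ denotes the $i$-th standard basis vector of $\mathbb{F}_2^n$. The vector $\tilde p$ is the output of decoding with the faulty error-locator polynomial $\varepsilon x^d+\prod_{l\in I_p}(x-\alpha_l)$ (its zeros among the $\alpha_k$). *)

theory Defs
  imports Main "HOL-Library.Z2"
begin

text \<open>Vectors in F_2^n are modelled as functions nat => bit, with coordinates
  indexed by 1..n and all other coordinates equal to 0.\<close>

definition vec2 :: "nat \<Rightarrow> (nat \<Rightarrow> bit) \<Rightarrow> bool" where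
  "vec2 n c \<longleftrightarrow> (\<forall>k. k \<notin> {1..n} \<longrightarrow> c k = 0)"

definition supp_idx :: "nat \<Rightarrow> (nat \<Rightarrow> bit) \<Rightarrow> nat set" where
  "supp_idx n c = {i \<in> {1..n}. c i = 1}"

definition wt :: "nat \<Rightarrow> (nat \<Rightarrow> bit) \<Rightarrow> nat" where
  "wt n c = card (supp_idx n c)"

definition unit_vec :: "nat \<Rightarrow> nat \<Rightarrow> bit" where
  "unit_vec i = (\<lambda>k. if k = i then 1 else 0)"

definition support_tuple :: "nat \<Rightarrow> (nat \<Rightarrow> 'a) \<Rightarrow> bool" where
  "support_tuple n \<alpha> \<longleftrightarrow> inj_on \<alpha> {1..n}"

definition faulty_decode ::
  "nat \<Rightarrow> (nat \<Rightarrow> 'a::field) \<Rightarrow> (nat \<Rightarrow> bit) \<Rightarrow> nat \<Rightarrow> 'a \<Rightarrow> nat \<Rightarrow> bit" where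
  "faulty_decode n \<alpha> p d \<epsilon> = (\<lambda>k. if k \<in> {1..n} \<and>
      \<epsilon> * \<alpha> k ^ d + (\<Prod>l\<in>supp_idx n p. \<alpha> k - \<alpha> l) = 0 then 1 else 0)"

end

theory Submission
  imports Defs "HOL-Number_Theory.Number_Theory"
begin

lemma char2:
  assumes "card (UNIV :: 'a::{field,finite} set) = 2 ^ m" "0 < m"
  shows "(2::'a) = 0"
proof -
  have pos: "CHAR('a) > 0" by (simp add: finite_imp_CHAR_pos)
  have pr: "prime CHAR('a)" using prime_CHAR_semidom[OF pos] .
  have "CHAR('a) dvd 2 ^ m" using CHAR_dvd_CARD[where 'a='a] assms(1) by simp
  hence "CHAR('a) dvd 2" using pr prime_dvd_power by blast
  hence "CHAR('a) = 2" using pr using primes_dvd_imp_eq two_is_prime_nat by blast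
  hence "of_nat 2 = (0::'a)" by (metis of_nat_CHAR)
  thus ?thesis by simp
qed

lemma supp_two:
  assumes "i1 \<in> {1..n}" "i2 \<in> {1..n}" "i1 \<noteq> i2"
  shows "supp_idx n (\<lambda>k. unit_vec i1 k + unit_vec i2 k) = {i1, i2}"
  using assms by (auto simp: supp_idx_def unit_vec_def)

lemma supp_one:
  assumes "i \<in> {1..n}"
  shows "supp_idx n (unit_vec i) = {i}"
  using assms by (auto simp: supp_idx_def unit_vec_def)

lemma roots_of:
  assumes "supp_idx n (faulty_decode n \<alpha> p d \<epsilon>) = {j1, j2}"
  shows "j1 \<in> {1..n} \<and> j2 \<in> {1..n} \<and>
     \<epsilon> * \<alpha> j1 ^ d + (\<Prod>l\<in>supp_idx n p. \<alpha> j1 - \<alpha> l) = 0 \<and>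
     \<epsilon> * \<alpha> j2 ^ d + (\<Prod>l\<in>supp_idx n p. \<alpha> j2 - \<alpha> l) = 0"
proof -
  have "j1 \<in> supp_idx n (faulty_decode n \<alpha> p d \<epsilon>)" "j2 \<in> supp_idx n (faulty_decode n \<alpha> p d \<epsilon>)"
    using assms by auto
  thus ?thesis by (auto simp: supp_idx_def faulty_decode_def split: if_splits)
qed

lemma partA:
  fixes x y a b e :: "'a::field"
  assumes "e + (x - a) * (x - b) = 0" "e + (y - a) * (y - b) = 0" "x \<noteq> y"
  shows "a + b = x + y"
proof -
  have "(x - y) * (x + y - a - b) = (e + (x - a) * (x - b)) - (e + (y - a) * (y - b))"
    by (simp add: algebra_simps)
  hence "(x - y) * (x + y - a - b) = 0" using assms(1,2) by simp
  thus ?thesis using assms(3) by auto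
qed

lemma partB:
  fixes x y a e :: "'a::field"
  assumes "e * x^2 + (x - a) = 0" "e * y^2 + (y - a) = 0" "x \<noteq> y" "(2::'a) = 0"
  shows "a * x + a * y + x * y = 0 \<and> (a \<noteq> 0 \<longrightarrow> x \<noteq> 0 \<and> y \<noteq> 0)"
proof -
  have "(x - y) * (e * (x + y) + 1) = 0"
  proof -
    have "(x - y) * (e * (x + y) + 1) = (e * x^2 + (x - a)) - (e * y^2 + (y - a))"
      by (simp add: algebra_simps power2_eq_square)
    thus ?thesis using assms by simp
  qed
  hence s: "e * (x + y) = -1" using assms(3) by (simp add: eq_neg_iff_add_eq_0)
  hence en: "e \<noteq> 0" by auto
  have p: "e * (x * y) = - a"
  proof -
    have "e * (x * y) = x * (e * (x + y)) - e * x^2" by (simp add: algebra_simps power2_eq_square)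
    also have "\<dots> = - x - e * x^2" using s by simp
    also have "\<dots> = - a" using assms(1) by (simp add: algebra_simps)
    finally show ?thesis .
  qed
  have "e * (a * x + a * y + x * y) = a * (e * (x + y)) + e * (x * y)" by (simp add: algebra_simps)
  also have "\<dots> = - (2 * a)" using s p by simp
  also have "\<dots> = 0" using assms(4) by simp
  finally have "a * x + a * y + x * y = 0" using en by simp
  moreover have "a \<noteq> 0 \<longrightarrow> x \<noteq> 0 \<and> y \<noteq> 0" using assms(1,2) by auto
  ultimately show ?thesis by blast
qed

theorem proposition5p2:
  fixes m t n d :: nat
    and \<alpha> :: "nat \<Rightarrow> 'a::{field,finite}"
    and p :: "nat \<Rightarrow> bit"
    and \<epsilon> :: 'a
  assumes "0 < m" "0 < t" "0 < n"
    and "m * t < n" "n \<le> 2 ^ m"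
    and "card (UNIV :: 'a set) = 2 ^ m"
    and "support_tuple n \<alpha>"
    and "vec2 n p" "0 < wt n p" "wt n p \<le> t"
    and "d < t"
  shows
    "(\<forall>i1 i2 j1 j2. d = 0 \<and> i1 \<in> {1..n} \<and> i2 \<in> {1..n} \<and> i1 \<noteq> i2
        \<and> p = (\<lambda>k. unit_vec i1 k + unit_vec i2 k)
        \<and> wt n (faulty_decode n \<alpha> p d \<epsilon>) = 2
        \<and> supp_idx n (faulty_decode n \<alpha> p d \<epsilon>) = {j1, j2}
        \<longrightarrow> \<alpha> i1 + \<alpha> i2 = \<alpha> j1 + \<alpha> j2)
     \<and> (\<forall>i j1 j2. d = 2 \<and> i \<in> {1..n} \<and> p = unit_vec i
        \<and> wt n (faulty_decode n \<alpha> p d \<epsilon>) = 2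
        \<and> supp_idx n (faulty_decode n \<alpha> p d \<epsilon>) = {j1, j2}
        \<longrightarrow> \<alpha> i * \<alpha> j1 + \<alpha> i * \<alpha> j2 + \<alpha> j1 * \<alpha> j2 = 0
            \<and> (\<alpha> i \<noteq> 0 \<longrightarrow> \<alpha> j1 \<noteq> 0 \<and> \<alpha> j2 \<noteq> 0))"
proof (rule conjI; intro allI impI)
  fix i1 i2 j1 j2
  assume h: "d = 0 \<and> i1 \<in> {1..n} \<and> i2 \<in> {1..n} \<and> i1 \<noteq> i2
        \<and> p = (\<lambda>k. unit_vec i1 k + unit_vec i2 k)
        \<and> wt n (faulty_decode n \<alpha> p d \<epsilon>) = 2
        \<and> supp_idx n (faulty_decode n \<alpha> p d \<epsilon>) = {j1, j2}"
  have sp: "supp_idx n p = {i1, i2}" using h supp_two by blast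
  have r: "j1 \<in> {1..n} \<and> j2 \<in> {1..n} \<and>
     \<epsilon> * \<alpha> j1 ^ d + (\<Prod>l\<in>supp_idx n p. \<alpha> j1 - \<alpha> l) = 0 \<and>
     \<epsilon> * \<alpha> j2 ^ d + (\<Prod>l\<in>supp_idx n p. \<alpha> j2 - \<alpha> l) = 0"
    using roots_of h by blast
  have "j1 \<noteq> j2" using h unfolding wt_def by auto
  hence ne: "\<alpha> j1 \<noteq> \<alpha> j2" using r assms(7) unfolding support_tuple_def inj_on_def by blast
  show "\<alpha> i1 + \<alpha> i2 = \<alpha> j1 + \<alpha> j2"
    using partA[OF _ _ ne, of \<epsilon> "\<alpha> i1" "\<alpha> i2"] r h sp by simp
next
  fix i j1 j2
  assume h: "d = 2 \<and> i \<in> {1..n} \<and> p = unit_vec i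
        \<and> wt n (faulty_decode n \<alpha> p d \<epsilon>) = 2
        \<and> supp_idx n (faulty_decode n \<alpha> p d \<epsilon>) = {j1, j2}"
  have sp: "supp_idx n p = {i}" using h supp_one by blast
  have r: "j1 \<in> {1..n} \<and> j2 \<in> {1..n} \<and>
     \<epsilon> * \<alpha> j1 ^ d + (\<Prod>l\<in>supp_idx n p. \<alpha> j1 - \<alpha> l) = 0 \<and>
     \<epsilon> * \<alpha> j2 ^ d + (\<Prod>l\<in>supp_idx n p. \<alpha> j2 - \<alpha> l) = 0"
    using roots_of h by blast
  have "j1 \<noteq> j2" using h unfolding wt_def by auto
  hence ne: "\<alpha> j1 \<noteq> \<alpha> j2" using r assms(7) unfolding support_tuple_def inj_on_def by blast
  have two: "(2::'a) = 0" using char2 assms(6,1) by blast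
  show "\<alpha> i * \<alpha> j1 + \<alpha> i * \<alpha> j2 + \<alpha> j1 * \<alpha> j2 = 0 \<and> (\<alpha> i \<noteq> 0 \<longrightarrow> \<alpha> j1 \<noteq> 0 \<and> \<alpha> j2 \<noteq> 0)"
    using partB[OF _ _ ne two, of \<epsilon> "\<alpha> i"] r h sp by simp
qed

end
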